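(* For $i=1,2$ let $\lambda_i\in\mathbb{C}^*$, $\alpha_i\in\mathbb{C}\setminus\{0\}$, and $h_i=\xi_it+\eta_i\in\mathbb{C}[t]$ with $\xi_i\ne0$. Then $\Omega(\lambda_1,\alpha_1,h_1)\cong\Omega(\lambda_2,\alpha_2,h_2)$ as $\mathrm{Vir}$-modules if and only if $\lambda_1=\lambda_2$ and $\alpha_1\xi_1=\alpha_2\xi_2$; and in that case the isomorphisms are exactly the nonzero scalar multiples of the linear map $\phi$ with $\phi(s^ih_1^n)=s^ig_n(h_2)$ for all $n,i\in\mathbb{Z}_+$, where $g_n(x)=\sum_{i=0}^n\binom{n}{i}b_{n-i}x^i$ and $b_0=1$, $b_1=0$, $b_{i+1}=ib_i+i(\eta_2-\eta_1)b_{i-1}$ for $i\in\mathbb{N}$.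
   Context: $\mathrm{Vir}$ is the Lie algebra with basis $\{d_i,c\mid i\in\mathbb{Z}\}$ and brackets $[d_i,d_j]=(j-i)d_{i+j}+\delta_{i,-j}\frac{i^3-i}{12}c$, $[c,d_i]=0$. For $\lambda\in\mathbb{C}^*$, $\alpha\in\mathbb{C}$, $h\in\mathbb{C}[t]$, define operators on $\mathbb{C}[t]$ by $F(f)=\frac{h(t)-h(\alpha)}{t-\alpha}f(t)-f'(t)$ and $G(f)=h(\alpha)f+tF(f)$. The $\mathrm{Vir}$-module $\Omega(\lambda,\alpha,h)$ is the vector space $\mathbb{C}[t,s]$ with $c$ acting as $0$ and $d_m(f(t)s^i)=\lambda^m(s-m)^i\big(sf+mG(f)-m^2\alpha F(f)\big)$ for $m\in\mathbb{Z}$, $i\in\mathbb{Z}_+$, $f\in\mathbb{C}[t]$. *)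

theory Defs
  imports "HOL-Computational_Algebra.Polynomial"
begin

text \<open>The space C[t,s] is represented as complex poly poly: polynomials in s
  whose coefficients are polynomials in t. So f(t) s^i is  monom f i.\<close>

type_synonym cts = "complex poly poly"

definition Fop :: "complex \<Rightarrow> complex poly \<Rightarrow> complex poly \<Rightarrow> complex poly" where
  "Fop \<alpha> h f = ((h - [:poly h \<alpha>:]) div pCons (- \<alpha>) 1) * f - pderiv f"

definition Gop :: "complex \<Rightarrow> complex poly \<Rightarrow> complex poly \<Rightarrow> complex poly" where
  "Gop \<alpha> h f = smult (poly h \<alpha>) f + [:0, 1:] * Fop \<alpha> h f"

text \<open>Action of d_m on Omega(lambda, alpha, h), extended linearly from
  d_m(f(t) s^i) = lambda^m (s-m)^i (s f + m G(f) - m^2 alpha F(f)).\<close>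
definition omega_d :: "complex \<Rightarrow> complex \<Rightarrow> complex poly \<Rightarrow> int \<Rightarrow> cts \<Rightarrow> cts" where
  "omega_d l \<alpha> h m P =
     (\<Sum>i\<le>degree P. smult [:l powi m:]
        ((pCons (- of_int m) 1) ^ i *
         pCons (smult (of_int m) (Gop \<alpha> h (coeff P i))
            - smult ((of_int m) ^ 2 * \<alpha>) (Fop \<alpha> h (coeff P i))) (pCons (coeff P i) 0)))"

datatype vir_basis = Dvir int | Cvir

fun omega_act :: "complex \<Rightarrow> complex \<Rightarrow> complex poly \<Rightarrow> vir_basis \<Rightarrow> cts \<Rightarrow> cts" where
  "omega_act l \<alpha> h (Dvir m) P = omega_d l \<alpha> h m P"
| "omega_act l \<alpha> h Cvir P = 0"

definition cscale :: "complex \<Rightarrow> cts \<Rightarrow> cts" where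
  "cscale a P = smult [:a:] P"

definition clinear :: "(cts \<Rightarrow> cts) \<Rightarrow> bool" where
  "clinear \<phi> \<longleftrightarrow> (\<forall>P Q. \<phi> (P + Q) = \<phi> P + \<phi> Q) \<and> (\<forall>a P. \<phi> (cscale a P) = cscale a (\<phi> P))"

definition omega_iso :: "complex \<Rightarrow> complex \<Rightarrow> complex poly \<Rightarrow> complex \<Rightarrow> complex \<Rightarrow> complex poly
                          \<Rightarrow> (cts \<Rightarrow> cts) \<Rightarrow> bool" where
  "omega_iso l1 \<alpha>1 h1 l2 \<alpha>2 h2 \<phi> \<longleftrightarrow> clinear \<phi> \<and> bij \<phi> \<and>
     (\<forall>x P. \<phi> (omega_act l1 \<alpha>1 h1 x P) = omega_act l2 \<alpha>2 h2 x (\<phi> P))"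

definition omega_isomorphic :: "complex \<Rightarrow> complex \<Rightarrow> complex poly \<Rightarrow> complex \<Rightarrow> complex \<Rightarrow> complex poly \<Rightarrow> bool" where
  "omega_isomorphic l1 \<alpha>1 h1 l2 \<alpha>2 h2 \<longleftrightarrow> (\<exists>\<phi>. omega_iso l1 \<alpha>1 h1 l2 \<alpha>2 h2 \<phi>)"

fun bseq :: "complex \<Rightarrow> nat \<Rightarrow> complex" where
  "bseq \<delta> 0 = 1"
| "bseq \<delta> (Suc 0) = 0"
| "bseq \<delta> (Suc (Suc k)) = of_nat (Suc k) * bseq \<delta> (Suc k) + of_nat (Suc k) * \<delta> * bseq \<delta> k"

definition gpoly :: "complex \<Rightarrow> nat \<Rightarrow> complex poly \<Rightarrow> complex poly" where
  "gpoly \<delta> n x = (\<Sum>i\<le>n. smult (of_nat (n choose i) * bseq \<delta> (n - i)) (x ^ i))"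

end

theory Submission
  imports Defs "HOL-Computational_Algebra.Polynomial"
begin

lemma additive_sum:
  fixes L :: "'a::comm_monoid_add \<Rightarrow> 'b::ab_group_add"
  assumes "\<And>a b. L (a + b) = L a + L b"
  shows "L (\<Sum>i\<in>A. f i) = (\<Sum>i\<in>A. L (f i))"
proof -
  have L0: "L 0 = 0" using assms[of 0 0] by simp
  show ?thesis
  proof (induction A rule: infinite_finite_induct)
    case (infinite A) then show ?case using L0 by simp
  next
    case empty then show ?case using L0 by simp
  next
    case (insert x F) then show ?case using assms by simp
  qed
qed

lemma smult_sum_right: fixes a :: "'a::comm_ring_1" shows "smult a (\<Sum>i\<in>A. f i) = (\<Sum>i\<in>A. smult a (f i))"
  by (rule additive_sum[where L="smult a"]) (simp add: smult_add_right)

lemma sum_pCons0: fixes f :: "_ \<Rightarrow> 'a::comm_ring_1 poly" shows "(\<Sum>i\<in>A. pCons 0 (f i)) = pCons 0 (\<Sum>i\<in>A. f i)"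
  by (rule additive_sum[where L="pCons 0", symmetric]) simp

lemma Fop_add: "Fop \<alpha> h (f + g) = Fop \<alpha> h f + Fop \<alpha> h g"
  by (simp add: Fop_def algebra_simps pderiv_add)
lemma Fop_smult: "Fop \<alpha> h (smult a f) = smult a (Fop \<alpha> h f)"
  by (simp add: Fop_def pderiv_smult smult_diff_right mult_smult_left mult_smult_right)
lemma Fop_0[simp]: "Fop \<alpha> h 0 = 0"
  by (simp add: Fop_def)
lemma Fop_diff: "Fop \<alpha> h (f - g) = Fop \<alpha> h f - Fop \<alpha> h g"
  by (simp add: Fop_def algebra_simps pderiv_diff)
lemma Gop_add: "Gop \<alpha> h (f + g) = Gop \<alpha> h f + Gop \<alpha> h g"
  by (simp add: Gop_def Fop_add smult_add_right distrib_left)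
lemma Gop_smult: "Gop \<alpha> h (smult a f) = smult a (Gop \<alpha> h f)"
  by (simp add: Gop_def Fop_smult smult_add_right mult_smult_right mult.commute)
lemma Gop_0[simp]: "Gop \<alpha> h 0 = 0"
  by (simp add: Gop_def)
lemma Gop_diff: "Gop \<alpha> h (f - g) = Gop \<alpha> h f - Gop \<alpha> h g"
  by (simp add: Gop_def Fop_diff smult_diff_right right_diff_distrib)

lemma Fop_lin:
  assumes "\<xi> \<noteq> 0"
  shows "Fop \<alpha> [:\<eta>, \<xi>:] f = smult \<xi> f - pderiv f"
proof -
  have e: "[:\<eta>, \<xi>:] - [:poly [:\<eta>, \<xi>:] \<alpha>:] = [:\<xi>:] * pCons (- \<alpha>) 1"
    by (simp add: algebra_simps)
  have "pCons (- \<alpha>) 1 \<noteq> (0::complex poly)" by simp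
  have e2: "[:- (\<alpha> * \<xi>), \<xi>:] = [:\<xi>:] * pCons (- \<alpha>) 1" by simp
  have "([:\<eta>, \<xi>:] - [:poly [:\<eta>, \<xi>:] \<alpha>:]) div pCons (- \<alpha>) 1 = [:\<xi>:]"
    unfolding e e2 by (rule nonzero_mult_div_cancel_right) simp
  then show ?thesis by (simp add: Fop_def)
qed

lemma Gop_lin:
  assumes "\<xi> \<noteq> 0"
  shows "Gop \<alpha> [:\<eta>, \<xi>:] f = smult (\<eta> + \<xi> * \<alpha>) f + [:0,1:] * (smult \<xi> f - pderiv f)"
  using assms by (simp add: Gop_def Fop_lin mult.commute)

definition tm :: "complex \<Rightarrow> complex poly \<Rightarrow> complex \<Rightarrow> complex poly \<Rightarrow> cts" where
  "tm \<alpha> h x f = pCons (smult x (Gop \<alpha> h f) - smult (x^2 * \<alpha>) (Fop \<alpha> h f)) [:f:]"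

lemma tm_0[simp]: "tm \<alpha> h x 0 = 0" by (simp add: tm_def)
lemma tm_add: "tm \<alpha> h x (f + g) = tm \<alpha> h x f + tm \<alpha> h x g"
  by (simp add: tm_def Gop_add Fop_add smult_add_right)
lemma tm_diff: "tm \<alpha> h x (f - g) = tm \<alpha> h x f - tm \<alpha> h x g"
  by (simp add: tm_def Gop_diff Fop_diff smult_diff_right)
lemma tm_smult: "tm \<alpha> h x (smult a f) = smult [:a:] (tm \<alpha> h x f)"
  by (simp add: tm_def Gop_smult Fop_smult algebra_simps)

definition Dx :: "complex \<Rightarrow> complex poly \<Rightarrow> complex \<Rightarrow> cts \<Rightarrow> cts" where
  "Dx \<alpha> h x P = (\<Sum>i\<le>degree P. (pCons [:-x:] 1)^i * tm \<alpha> h x (coeff P i))"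

lemma omega_d_Dx: "omega_d l \<alpha> h m P = smult [:l powi m:] (Dx \<alpha> h (of_int m) P)"
  unfolding omega_d_def Dx_def tm_def by (simp add: of_int_poly smult_sum_right)

lemma Dx_bound:
  assumes "degree P \<le> n"
  shows "Dx \<alpha> h x P = (\<Sum>i\<le>n. (pCons [:-x:] 1)^i * tm \<alpha> h x (coeff P i))"
proof -
  have "(\<Sum>i\<le>n. (pCons [:-x:] 1)^i * tm \<alpha> h x (coeff P i))
      = (\<Sum>i\<le>degree P. (pCons [:-x:] 1)^i * tm \<alpha> h x (coeff P i))"
    by (rule sum.mono_neutral_right) (use assms in \<open>auto simp: coeff_eq_0\<close>)
  then show ?thesis by (simp add: Dx_def)
qed

lemma Dx_add: "Dx \<alpha> h x (P + Q) = Dx \<alpha> h x P + Dx \<alpha> h x Q"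
proof -
  let ?n = "max (degree P) (degree Q)"
  have "degree (P + Q) \<le> ?n" by (simp add: degree_add_le)
  then show ?thesis
    by (simp add: Dx_bound[of P ?n] Dx_bound[of Q ?n] Dx_bound[of "P+Q" ?n] tm_add
        distrib_left sum.distrib)
qed

lemma Dx_diff: "Dx \<alpha> h x (P - Q) = Dx \<alpha> h x P - Dx \<alpha> h x Q"
proof -
  let ?n = "max (degree P) (degree Q)"
  have "degree (P - Q) \<le> ?n" by (simp add: degree_diff_le)
  then show ?thesis
    by (simp add: Dx_bound[of P ?n] Dx_bound[of Q ?n] Dx_bound[of "P-Q" ?n] tm_diff
        right_diff_distrib sum_subtractf)
qed

lemma Dx_cscale: "Dx \<alpha> h x (cscale a P) = cscale a (Dx \<alpha> h x P)"
proof -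
  have "degree (cscale a P) \<le> degree P" by (simp add: cscale_def degree_smult_le)
  then show ?thesis
    by (simp add: Dx_bound[of "cscale a P" "degree P"] Dx_def cscale_def tm_smult
        smult_sum_right mult_smult_right)
qed

lemma Dx_zero: "Dx \<alpha> h 0 P = [:0,1:] * P"
proof -
  have "Dx \<alpha> h 0 P = (\<Sum>i\<le>degree P. [:0,1:] * monom (coeff P i) i)"
    unfolding Dx_def tm_def
    by (intro sum.cong refl) (simp add: monom_altdef smult_monom algebra_simps one_pCons)
  also have "\<dots> = [:0,1:] * P"
    by (simp add: sum_pCons0 poly_as_sum_of_monoms)
  finally show ?thesis .
qed

lemma Dx_const: "Dx \<alpha> h x [:f:] = tm \<alpha> h x f"
  using Dx_bound[of "[:f:]" 0] by simp

lemma const_poly_power: "[:a:] ^ n = [:a ^ n:]"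
  by (induction n) (auto simp: one_pCons mult.commute)

lemma const_mult_smult: "[:a:] * p = smult a p"
  by simp

lemma poly_const_eval: fixes P :: "complex poly poly"
  shows "poly P [:y:] = (\<Sum>i\<le>degree P. smult (y ^ i) (coeff P i))"
  unfolding poly_altdef by (intro sum.cong refl) (simp add: const_poly_power mult.commute)

lemma Gop_sum: "Gop \<alpha> h (\<Sum>i\<in>A. f i) = (\<Sum>i\<in>A. Gop \<alpha> h (f i))"
  by (rule additive_sum) (simp add: Gop_add)
lemma Fop_sum: "Fop \<alpha> h (\<Sum>i\<in>A. f i) = (\<Sum>i\<in>A. Fop \<alpha> h (f i))"
  by (rule additive_sum) (simp add: Fop_add)

lemma Dx_eval:
  "poly (Dx \<alpha> h x P) [:z:] = smult z (poly P [:z-x:]) + smult x (Gop \<alpha> h (poly P [:z-x:]))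
     - smult (x^2*\<alpha>) (Fop \<alpha> h (poly P [:z-x:]))"
proof -
  have "poly (Dx \<alpha> h x P) [:z:] = (\<Sum>i\<le>degree P. smult ((z-x)^i)
     (smult z (coeff P i) + smult x (Gop \<alpha> h (coeff P i)) - smult (x^2*\<alpha>) (Fop \<alpha> h (coeff P i))))"
    unfolding Dx_def poly_sum tm_def
    by (intro sum.cong refl) (simp add: const_poly_power algebra_simps smult_add_right smult_diff_right)
  also have "\<dots> = smult z (poly P [:z-x:]) + smult x (Gop \<alpha> h (poly P [:z-x:]))
     - smult (x^2*\<alpha>) (Fop \<alpha> h (poly P [:z-x:]))"
    unfolding poly_const_eval Gop_sum Fop_sum smult_sum_right
    by (simp add: smult_add_right smult_diff_right sum.distrib sum_subtractf Gop_smult Fop_smult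
        mult.commute)
  finally show ?thesis .
qed

lemma poly_inf_roots:
  fixes R :: "'a::{comm_ring_1,ring_no_zero_divisors} poly"
  assumes "\<And>k::nat. k \<ge> 1 \<Longrightarrow> poly R (g k) = 0" "inj g"
  shows "R = 0"
proof (rule ccontr)
  assume "R \<noteq> 0"
  then have "finite {x. poly R x = 0}" by (rule poly_roots_finite)
  moreover have "g ` {k. k \<ge> 1} \<subseteq> {x. poly R x = 0}" using assms(1) by auto
  ultimately have "finite (g ` {k::nat. k \<ge> 1})" by (rule finite_subset[rotated])
  then have "finite {k::nat. k \<ge> 1}"
    using assms(2) by (metis finite_imageD inj_on_subset subset_UNIV)
  moreover have "infinite {k::nat. k \<ge> 1}"
  proof -
    have "{k::nat. k \<ge> 1} = {1..}" by auto
    then show ?thesis using infinite_Ici by metis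
  qed
  ultimately show False by simp
qed

lemma poly_nat_roots:
  fixes R :: "complex poly"
  assumes "\<And>k::nat. poly R (of_nat k) = 0"
  shows "R = 0"
  by (rule poly_inf_roots[of R "of_nat"]) (use assms in \<open>auto simp: inj_def\<close>)

lemma degree_shift_diff_less:
  fixes q :: "complex poly"
  assumes "degree q > 0"
  shows "degree (pcompose q [:1,1:] - q) < degree q"
proof -
  let ?n = "degree q"
  have d: "degree (pcompose q [:1,1:]) = ?n" by (simp add: degree_pcompose)
  have l: "lead_coeff (pcompose q [:1,1:]) = lead_coeff q" by (simp add: lead_coeff_comp)
  have le: "degree (pcompose q [:1,1:] - q) \<le> ?n" by (rule degree_diff_le) (simp_all add: d)
  have c: "coeff (pcompose q [:1,1:] - q) ?n = 0" using l d by simp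
  show ?thesis
  proof (cases "pcompose q [:1,1:] - q = 0")
    case True then show ?thesis using assms by simp
  next
    case False
    then have "coeff (pcompose q [:1,1:] - q) (degree (pcompose q [:1,1:] - q)) \<noteq> 0"
      using leading_coeff_0_iff by blast
    then show ?thesis using le c by (metis le_neq_implies_less)
  qed
qed

lemma exp_poly:
  fixes r :: complex and p q :: "complex poly"
  assumes "r \<noteq> 1" "r \<noteq> 0" "\<And>m::nat. r^m * poly p (of_nat m) = poly q (of_nat m)"
  shows "p = 0"
  using assms(3)
proof (induction "degree q" arbitrary: p q rule: less_induct)
  case less
  define p' where "p' = smult r (pcompose p [:1,1:]) - p"
  define q' where "q' = pcompose q [:1,1:] - q"
  have eq: "r^m * poly p' (of_nat m) = poly q' (of_nat m)" for m :: nat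
  proof -
    have "r^m * poly p' (of_nat m) = r^(Suc m) * poly p (of_nat (Suc m)) - r^m * poly p (of_nat m)"
      by (simp add: p'_def poly_pcompose algebra_simps)
    also have "\<dots> = poly q (of_nat (Suc m)) - poly q (of_nat m)"
      using less.prems[of m] less.prems[of "Suc m"] by simp
    also have "\<dots> = poly q' (of_nat m)" by (simp add: q'_def poly_pcompose algebra_simps)
    finally show ?thesis .
  qed
  have p'0: "p' = 0"
  proof (cases "degree q = 0")
    case True
    then obtain c where "q = [:c:]" by (metis degree_eq_zeroE)
    then have "q' = 0" by (simp add: q'_def)
    then have "poly p' (of_nat m) = 0" for m :: nat using eq[of m] assms(2) by simp
    then show ?thesis by (rule poly_nat_roots)
  next
    case False
    then have "degree q' < degree q" unfolding q'_def by (intro degree_shift_diff_less) simp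
    then show ?thesis using less.hyps eq by blast
  qed
  show "p = 0"
  proof (rule ccontr)
    assume "p \<noteq> 0"
    have d: "degree (pcompose p [:1,1:]) = degree p" by (simp add: degree_pcompose)
    have l: "lead_coeff (pcompose p [:1,1:]) = lead_coeff p" by (simp add: lead_coeff_comp)
    have "coeff p' (degree p) = (r - 1) * lead_coeff p" using d l by (simp add: p'_def algebra_simps)
    moreover have "lead_coeff p \<noteq> 0" using \<open>p \<noteq> 0\<close> by simp
    ultimately show False using p'0 assms(1) by simp
  qed
qed

definition gb :: "complex \<Rightarrow> nat \<Rightarrow> complex poly" where
  "gb \<delta> n = gpoly \<delta> n [:0,1:]"

lemma gb_monoms: "gb \<delta> n = (\<Sum>i\<le>n. monom (of_nat (n choose i) * bseq \<delta> (n - i)) i)"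
  unfolding gb_def gpoly_def by (simp add: monom_altdef)

lemma coeff_gb: "coeff (gb \<delta> n) i = (if i \<le> n then of_nat (n choose i) * bseq \<delta> (n - i) else 0)"
  unfolding gb_monoms coeff_sum by (simp add: coeff_monom)

lemma pcompose_X_power: "pcompose ([:0,1:] ^ i) h = h ^ i"
  by (induction i) (simp_all add: pcompose_mult pcompose_1 pcompose_pCons)

lemma gpoly_comp: "gpoly \<delta> n h = pcompose (gb \<delta> n) h"
  unfolding gb_def gpoly_def by (simp add: pcompose_sum pcompose_smult pcompose_X_power)

lemma coeff_gb_0: "coeff (gb \<delta> n) 0 = bseq \<delta> n"
  by (simp add: coeff_gb)

lemma degree_gb: "degree (gb \<delta> n) = n"
proof (rule antisym)
  show "degree (gb \<delta> n) \<le> n" by (rule degree_le) (simp add: coeff_gb)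
  show "n \<le> degree (gb \<delta> n)" by (rule le_degree) (simp add: coeff_gb)
qed

lemma coeff_gb_n: "coeff (gb \<delta> n) n = 1"
  by (simp add: coeff_gb)

lemma pderiv_gb: "pderiv (gb \<delta> n) = smult (of_nat n) (gb \<delta> (n - 1))"
proof (rule poly_eqI)
  fix i
  show "coeff (pderiv (gb \<delta> n)) i = coeff (smult (of_nat n) (gb \<delta> (n - 1))) i"
  proof (cases n)
    case 0 then show ?thesis by (simp add: coeff_pderiv coeff_gb)
  next
    case (Suc m)
    have e: "of_nat (Suc i) * of_nat (Suc m choose Suc i) = (of_nat (Suc m) * of_nat (m choose i) :: complex)"
      using Suc_times_binomial[of i m] by (metis of_nat_mult)
    show ?thesis using Suc
      by (simp add: coeff_pderiv coeff_gb mult.assoc[symmetric] e del: binomial_Suc_Suc of_nat_Suc)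
  qed
qed

lemma poly_eq_by_pderiv:
  fixes p q :: "complex poly"
  assumes "pderiv p = pderiv q" "coeff p 0 = coeff q 0"
  shows "p = q"
proof -
  have "pderiv (p - q) = 0" using assms by (simp add: pderiv_diff)
  then have "degree (p - q) = 0" by (simp add: pderiv_eq_0_iff)
  then have "p - q = [:coeff (p - q) 0:]" by (metis degree_0_id)
  then show ?thesis using assms by simp
qed

lemma smult_as_mult: "smult a p = [:a:] * p" by simp

definition Rg :: "complex \<Rightarrow> nat \<Rightarrow> complex poly" where
  "Rg \<delta> n = [:0,1:] * gb \<delta> n + smult (of_nat n) (gb \<delta> n)
      - smult (of_nat n) ([:0,1:] * gb \<delta> (n - 1)) + smult (of_nat n * \<delta>) (gb \<delta> (n - 1))"

lemma gb_1: "gb \<delta> 1 = [:0,1:]"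
  by (rule poly_eqI) (auto simp: coeff_gb coeff_pCons split: nat.splits)

lemma gb_0: "gb \<delta> 0 = 1"
  by (rule poly_eqI) (auto simp: coeff_gb coeff_pCons split: nat.splits)

lemma alg_rec: fixes P Q S X :: "complex poly" and b d :: complex
 shows "P + X*(smult (b+1) Q) + smult (b+1) (smult (b+1) Q) - smult (b+1) (Q + X*(smult b S))
   + smult ((b+1)*d)(smult b S) = P + smult (b+1) (X*Q + smult b Q - smult b (X*S) + smult (b*d) S)"
  by (simp add: smult_add_right smult_diff_right smult_add_left algebra_simps)

lemma gb_rec: "gb \<delta> (Suc n) = Rg \<delta> n"
proof (induction n)
  case 0 then show ?case using gb_1[of \<delta>] by (simp add: Rg_def gb_0)
next
  case (Suc n)
  let ?P = "gb \<delta> (Suc n)" and ?Q = "gb \<delta> n" and ?S = "gb \<delta> (n - 1)" and ?X = "[:0,1::complex:]"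
  let ?b = "of_nat n :: complex"
  have e1: "of_nat (Suc n) = ?b + 1" by simp
  have "pderiv (Rg \<delta> (Suc n)) = ?P + ?X*(smult (?b+1) ?Q) + smult (?b+1) (smult (?b+1) ?Q)
      - smult (?b+1) (?Q + ?X*(smult ?b ?S)) + smult ((?b+1)*\<delta>)(smult ?b ?S)"
    unfolding Rg_def e1
    by (simp add: pderiv_add pderiv_diff pderiv_mult pderiv_smult pderiv_gb pderiv_pCons
        smult_add_right mult.commute add.commute)
  also have "\<dots> = ?P + smult (?b+1) (Rg \<delta> n)"
    unfolding alg_rec Rg_def by simp
  finally have d: "pderiv (Rg \<delta> (Suc n)) = ?P + smult (?b+1) ?P" using Suc by simp
  show ?case
  proof (rule poly_eq_by_pderiv)
    show "pderiv (gb \<delta> (Suc (Suc n))) = pderiv (Rg \<delta> (Suc n))"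
      unfolding d pderiv_gb by (simp only: diff_Suc_1 of_nat_Suc smult_add_left smult_1_left add_ac)
    show "coeff (gb \<delta> (Suc (Suc n))) 0 = coeff (Rg \<delta> (Suc n)) 0"
      by (simp add: Rg_def coeff_gb_0 algebra_simps del: of_nat_Suc)
  qed
qed

definition Tu :: "complex \<Rightarrow> complex poly \<Rightarrow> complex poly" where
  "Tu \<delta> F = (\<Sum>k\<le>degree F. smult (coeff F k) (gb \<delta> k))"

lemma Tu_bound: "degree F \<le> N \<Longrightarrow> Tu \<delta> F = (\<Sum>k\<le>N. smult (coeff F k) (gb \<delta> k))"
  unfolding Tu_def by (rule sum.mono_neutral_left) (auto simp: coeff_eq_0)

lemma Tu_add: "Tu \<delta> (F + G) = Tu \<delta> F + Tu \<delta> G"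
proof -
  let ?N = "max (degree F) (degree G)"
  have "degree (F + G) \<le> ?N" by (simp add: degree_add_le)
  then show ?thesis
    by (simp add: Tu_bound[of F ?N] Tu_bound[of G ?N] Tu_bound[of "F+G" ?N] smult_add_left
        sum.distrib)
qed

lemma Tu_smult: "Tu \<delta> (smult a F) = smult a (Tu \<delta> F)"
proof -
  have "degree (smult a F) \<le> degree F" by (simp add: degree_smult_le)
  then show ?thesis
    by (simp add: Tu_bound[of "smult a F" "degree F"] Tu_def smult_sum_right)
qed

lemma Tu_0[simp]: "Tu \<delta> 0 = 0" by (simp add: Tu_def)

lemma Tu_diff: "Tu \<delta> (F - G) = Tu \<delta> F - Tu \<delta> G"
  using Tu_add[of \<delta> "F - G" G] by simp

lemma Tu_X_power: "Tu \<delta> ([:0,1:] ^ n) = gb \<delta> n"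
proof -
  have m: "[:0,1::complex:] ^ n = monom 1 n" by (simp add: monom_altdef)
  have "(\<Sum>k\<le>n. smult (coeff (monom 1 n) k) (gb \<delta> k)) = (\<Sum>k\<le>n. if k = n then gb \<delta> k else 0)"
    by (intro sum.cong refl) (auto simp: coeff_monom)
  then show ?thesis
    unfolding m by (simp add: Tu_def degree_monom_eq)
qed

lemma lin_expand:
  fixes L :: "complex poly \<Rightarrow> complex poly"
  assumes "\<And>a b. L (a + b) = L a + L b" "\<And>c a. L (smult c a) = smult c (L a)"
  shows "L F = (\<Sum>k\<le>degree F. smult (coeff F k) (L ([:0,1:] ^ k)))"
proof -
  have "F = (\<Sum>k\<le>degree F. smult (coeff F k) ([:0,1:] ^ k))"
    by (subst poly_as_sum_of_monoms[symmetric]) (simp add: monom_altdef)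
  then have "L F = L (\<Sum>k\<le>degree F. smult (coeff F k) ([:0,1:] ^ k))" by simp
  also have "\<dots> = (\<Sum>k\<le>degree F. L (smult (coeff F k) ([:0,1:] ^ k)))"
    by (rule additive_sum) (rule assms(1))
  finally show ?thesis by (simp add: assms(2))
qed

lemma lin_eq:
  fixes L M :: "complex poly \<Rightarrow> complex poly"
  assumes "\<And>a b. L (a + b) = L a + L b" "\<And>c a. L (smult c a) = smult c (L a)"
    "\<And>a b. M (a + b) = M a + M b" "\<And>c a. M (smult c a) = smult c (M a)"
    "\<And>n. L ([:0,1:] ^ n) = M ([:0,1:] ^ n)"
  shows "L F = M F"
  using lin_expand[of L F, OF assms(1,2)] lin_expand[of M F, OF assms(3,4)] assms(5) by simp

lemma coeff_Tu_top:
  assumes "degree F = n"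
  shows "coeff (Tu \<delta> F) n = coeff F n" and "degree (Tu \<delta> F) \<le> n"
proof -
  have "coeff (Tu \<delta> F) n = (\<Sum>k\<le>n. coeff F k * coeff (gb \<delta> k) n)"
    using assms by (simp add: Tu_def coeff_sum)
  also have "\<dots> = (\<Sum>k\<in>{n}. coeff F k * coeff (gb \<delta> k) n)"
    by (rule sum.mono_neutral_right) (auto simp: coeff_gb)
  finally show "coeff (Tu \<delta> F) n = coeff F n" by (simp add: coeff_gb)
  show "degree (Tu \<delta> F) \<le> n"
    unfolding Tu_def using assms
    by (intro degree_sum_le) (auto intro: order.trans[OF degree_smult_le] simp: degree_gb)
qed

lemma Tu_inj: "Tu \<delta> F = 0 \<Longrightarrow> F = 0"
  using coeff_Tu_top(1)[of F "degree F" \<delta>] by (metis coeff_0 leading_coeff_0_iff)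

lemma degree_le_Suc_top:
  assumes "degree p \<le> Suc n" "coeff p (Suc n) = 0"
  shows "degree p \<le> n"
proof (rule degree_le, intro allI impI)
  fix i assume "n < i"
  then show "coeff p i = 0" using assms by (cases "i = Suc n") (auto intro: coeff_eq_0)
qed

lemma Tu_surj: "\<exists>F. Tu \<delta> F = G"
proof -
  have "\<forall>G. degree G \<le> n \<longrightarrow> (\<exists>F. Tu \<delta> F = G)" for n
  proof (induction n)
    case 0
    show ?case
    proof (intro allI impI)
      fix G :: "complex poly" assume "degree G \<le> 0"
      then obtain a where "G = [:a:]" by (metis degree_0_id le_zero_eq)
      then have "Tu \<delta> (smult a ([:0,1:]^0)) = G" by (simp add: Tu_smult Tu_X_power[of \<delta> 0] gb_0 del: power_0)
      then show "\<exists>F. Tu \<delta> F = G" by blast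
    qed
  next
    case (Suc n)
    show ?case
    proof (intro allI impI)
      fix G :: "complex poly" assume dG: "degree G \<le> Suc n"
      let ?a = "coeff G (Suc n)"
      let ?G' = "G - smult ?a (gb \<delta> (Suc n))"
      have "degree ?G' \<le> n"
      proof (rule degree_le_Suc_top)
        show "degree ?G' \<le> Suc n"
          using dG by (intro degree_diff_le) (auto intro: order.trans[OF degree_smult_le] simp: degree_gb)
        show "coeff ?G' (Suc n) = 0" by (simp add: coeff_gb)
      qed
      then obtain F' where "Tu \<delta> F' = ?G'" using Suc by blast
      then have "Tu \<delta> (F' + smult ?a ([:0,1:]^Suc n)) = G"
        by (simp add: Tu_add Tu_smult Tu_X_power del: power_Suc)
      then show "\<exists>F. Tu \<delta> F = G" by blast
    qed
  qed
  then show ?thesis by blast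
qed

abbreviation "Xp \<equiv> [:0,1::complex:]"

definition Gt :: "complex \<Rightarrow> complex \<Rightarrow> complex poly \<Rightarrow> complex poly" where
  "Gt e c F = smult (e + c) F + (Xp - [:e:]) * (F - pderiv F)"

lemma Gt_add: "Gt e c (F + G) = Gt e c F + Gt e c G"
  by (simp add: Gt_def pderiv_add smult_add_right smult_diff_right algebra_simps)
lemma Gt_smult: "Gt e c (smult a F) = smult a (Gt e c F)"
  by (simp add: Gt_def pderiv_smult smult_add_right smult_diff_right algebra_simps)

lemma pderiv_smult': "pderiv (smult a F) = smult a (pderiv F)" by (rule pderiv_smult)

lemma Tu_pderiv: "Tu \<delta> (pderiv F) = pderiv (Tu \<delta> F)"
proof (rule lin_eq[where L="\<lambda>F. Tu \<delta> (pderiv F)" and M="\<lambda>F. pderiv (Tu \<delta> F)"])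
  fix n :: nat
  show "Tu \<delta> (pderiv (Xp ^ n)) = pderiv (Tu \<delta> (Xp ^ n))"
    by (simp add: pderiv_power Tu_smult Tu_X_power pderiv_gb pderiv_pCons)
qed (simp_all add: pderiv_add Tu_add Tu_smult pderiv_smult)

lemma alg_G: fixes A B X :: "complex poly" and k e1 e2 c :: complex
  shows "(X * A + smult k A - smult k (X * B) + smult (k * (e2 - e1)) B) + smult c A - smult k A
     + smult (k * e1) B = smult (e2 + c) A + (X - [:e2:]) * (A - smult k B)"
  by (simp add: smult_add_right smult_diff_right smult_add_left smult_diff_left algebra_simps)

lemma alg_X: fixes X Y :: "complex poly" and e c k :: complex
  shows "smult (e+c) (X*Y) + (X - [:e:])*(X*Y - smult k Y) = X*(X*Y) + smult c (X*Y) - smult k (X*Y) + smult (k*e) Y"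
  by (simp add: smult_add_right smult_diff_right smult_add_left algebra_simps)

lemma Gt_X_power: "Gt e c (Xp ^ Suc m) = Xp ^ Suc (Suc m) + smult c (Xp ^ Suc m)
   - smult (of_nat (Suc m)) (Xp ^ Suc m) + smult (of_nat (Suc m) * e) (Xp ^ m)"
proof -
  have d: "pderiv (Xp ^ Suc m) = smult (of_nat (Suc m)) (Xp ^ m)"
    by (simp only: pderiv_power_Suc) (simp add: pderiv_pCons)
  show ?thesis unfolding Gt_def d
    using alg_X[of e c Xp "Xp^m" "of_nat (Suc m)"] by (simp only: power_Suc)
qed

lemma Tu_Gt: "Tu (e2 - e1) (Gt e1 c F) = Gt e2 c (Tu (e2 - e1) F)"
proof (rule lin_eq[where L="\<lambda>F. Tu (e2 - e1) (Gt e1 c F)" and M="\<lambda>F. Gt e2 c (Tu (e2 - e1) F)"])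
  fix n :: nat
  let ?d = "e2 - e1"
  show "Tu ?d (Gt e1 c (Xp ^ n)) = Gt e2 c (Tu ?d (Xp ^ n))"
  proof (cases n)
    case 0
    have "Tu ?d (Gt e1 c (Xp ^ 0)) = Tu ?d (smult c 1 + Xp)"
      by (simp add: Gt_def algebra_simps)
    also have "\<dots> = smult c 1 + Xp"
      using Tu_X_power[of ?d 0] Tu_X_power[of ?d 1] gb_0[of ?d] gb_1[of ?d]
      by (simp only: Tu_add Tu_smult) simp
    also have "\<dots> = Gt e2 c (Tu ?d (Xp ^ 0))"
      using Tu_X_power[of ?d 0] gb_0[of ?d] by (simp add: Gt_def algebra_simps)
    finally show ?thesis using 0 by simp
  next
    case (Suc m)
    let ?A = "gb ?d (Suc m)" and ?B = "gb ?d m" and ?k = "of_nat (Suc m) :: complex"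
    have "Tu ?d (Gt e1 c (Xp ^ n)) = gb ?d (Suc (Suc m)) + smult c ?A - smult ?k ?A + smult (?k * e1) ?B"
      unfolding Suc Gt_X_power by (simp only: Tu_add Tu_diff Tu_smult Tu_X_power)
    also have "gb ?d (Suc (Suc m)) = Xp * ?A + smult ?k ?A - smult ?k (Xp * ?B) + smult (?k * ?d) ?B"
      by (simp only: gb_rec Rg_def diff_Suc_1)
    also have "(Xp * ?A + smult ?k ?A - smult ?k (Xp * ?B) + smult (?k * ?d) ?B) + smult c ?A - smult ?k ?A
        + smult (?k * e1) ?B = smult (e2 + c) ?A + (Xp - [:e2:]) * (?A - smult ?k ?B)"
      by (rule alg_G)
    also have "\<dots> = Gt e2 c (Tu ?d (Xp ^ n))"
      unfolding Suc Tu_X_power Gt_def pderiv_gb by simp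
    finally show ?thesis .
  qed
qed (simp_all add: Gt_add Gt_smult Tu_add Tu_smult)

lemma pderiv_lin[simp]: "pderiv [:\<eta>, \<xi>:] = [:\<xi>::complex:]"
  by (simp add: pderiv_pCons)

lemma conjG:
  assumes "\<xi> \<noteq> 0"
  shows "Gop \<alpha> [:\<eta>, \<xi>:] (pcompose F [:\<eta>, \<xi>:]) = pcompose (Gt \<eta> (\<alpha> * \<xi>) F) [:\<eta>, \<xi>:]"
  using assms
  by (simp add: Gop_lin Gt_def pderiv_pcompose pcompose_add pcompose_smult pcompose_mult pcompose_diff
      pcompose_pCons algebra_simps smult_diff_right)

lemma conjF:
  assumes "\<xi> \<noteq> 0"
  shows "Fop \<alpha> [:\<eta>, \<xi>:] (pcompose F [:\<eta>, \<xi>:]) = smult \<xi> (pcompose (F - pderiv F) [:\<eta>, \<xi>:])"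
  using assms
  by (simp add: Fop_lin pderiv_pcompose pcompose_diff smult_diff_right algebra_simps)

definition ell :: "complex \<Rightarrow> complex \<Rightarrow> complex poly" where
  "ell \<eta> \<xi> = [:- \<eta> / \<xi>, 1 / \<xi>:]"

lemma comp_ell1: "\<xi> \<noteq> 0 \<Longrightarrow> pcompose [:\<eta>, \<xi>:] (ell \<eta> \<xi>) = Xp"
  by (simp add: ell_def pcompose_pCons field_simps)
lemma comp_ell2: "\<xi> \<noteq> 0 \<Longrightarrow> pcompose (ell \<eta> \<xi>) [:\<eta>, \<xi>:] = Xp"
  by (simp add: ell_def pcompose_pCons field_simps)

lemma comp_back1: "\<xi> \<noteq> 0 \<Longrightarrow> pcompose (pcompose f (ell \<eta> \<xi>)) [:\<eta>, \<xi>:] = f"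
  by (simp add: pcompose_assoc[symmetric] comp_ell2)
lemma comp_back2: "\<xi> \<noteq> 0 \<Longrightarrow> pcompose (pcompose f [:\<eta>, \<xi>:]) (ell \<eta> \<xi>) = f"
  by (simp add: pcompose_assoc[symmetric] comp_ell1)

locale twoh =
  fixes \<eta>1 \<xi>1 \<eta>2 \<xi>2 :: complex
  assumes \<xi>1: "\<xi>1 \<noteq> 0" and \<xi>2: "\<xi>2 \<noteq> 0"
begin

definition Tt :: "complex poly \<Rightarrow> complex poly" where
  "Tt f = pcompose (Tu (\<eta>2 - \<eta>1) (pcompose f (ell \<eta>1 \<xi>1))) [:\<eta>2, \<xi>2:]"

lemma Tt_add: "Tt (f + g) = Tt f + Tt g"
  by (simp add: Tt_def pcompose_add Tu_add)
lemma Tt_smult: "Tt (smult a f) = smult a (Tt f)"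
  by (simp add: Tt_def pcompose_smult Tu_smult)
lemma Tt_0[simp]: "Tt 0 = 0"
  by (simp add: Tt_def)
lemma Tt_diff: "Tt (f - g) = Tt f - Tt g"
  by (simp add: Tt_def pcompose_diff Tu_diff)

lemma Tt_h_power: "Tt ([:\<eta>1, \<xi>1:] ^ n) = gpoly (\<eta>2 - \<eta>1) n [:\<eta>2, \<xi>2:]"
proof -
  have "pcompose ([:\<eta>1, \<xi>1:] ^ n) (ell \<eta>1 \<xi>1) = Xp ^ n"
  proof (induction n)
    case 0 then show ?case by (simp add: pcompose_1)
  next
    case (Suc n) then show ?case by (simp only: power_Suc pcompose_mult comp_ell1[OF \<xi>1])
  qed
  then show ?thesis by (simp add: Tt_def Tu_X_power gpoly_comp)
qed

lemma Tt_G: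
  assumes "\<alpha>1 * \<xi>1 = \<alpha>2 * \<xi>2"
  shows "Tt (Gop \<alpha>1 [:\<eta>1, \<xi>1:] f) = Gop \<alpha>2 [:\<eta>2, \<xi>2:] (Tt f)"
proof -
  let ?F = "pcompose f (ell \<eta>1 \<xi>1)"
  have f: "f = pcompose ?F [:\<eta>1, \<xi>1:]" using \<xi>1 by (simp add: comp_back1)
  have "Tt (Gop \<alpha>1 [:\<eta>1, \<xi>1:] f) = pcompose (Tu (\<eta>2 - \<eta>1) (Gt \<eta>1 (\<alpha>1 * \<xi>1) ?F)) [:\<eta>2, \<xi>2:]"
    by (subst f) (simp add: Tt_def conjG[OF \<xi>1] comp_back2[OF \<xi>1])
  also have "\<dots> = pcompose (Gt \<eta>2 (\<alpha>2 * \<xi>2) (Tu (\<eta>2 - \<eta>1) ?F)) [:\<eta>2, \<xi>2:]"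
    by (simp add: Tu_Gt assms)
  also have "\<dots> = Gop \<alpha>2 [:\<eta>2, \<xi>2:] (Tt f)"
    by (simp add: Tt_def conjG[OF \<xi>2])
  finally show ?thesis .
qed

lemma Tt_F:
  assumes "\<alpha>1 * \<xi>1 = \<alpha>2 * \<xi>2"
  shows "smult \<alpha>1 (Tt (Fop \<alpha>1 [:\<eta>1, \<xi>1:] f)) = smult \<alpha>2 (Fop \<alpha>2 [:\<eta>2, \<xi>2:] (Tt f))"
proof -
  let ?F = "pcompose f (ell \<eta>1 \<xi>1)"
  have f: "f = pcompose ?F [:\<eta>1, \<xi>1:]" using \<xi>1 by (simp add: comp_back1)
  have "smult \<alpha>1 (Tt (Fop \<alpha>1 [:\<eta>1, \<xi>1:] f))
      = smult (\<alpha>1 * \<xi>1) (pcompose (Tu (\<eta>2 - \<eta>1) (?F - pderiv ?F)) [:\<eta>2, \<xi>2:])"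
    by (subst f) (simp add: Tt_def conjF[OF \<xi>1] comp_back2[OF \<xi>1] pcompose_smult Tu_smult)
  also have "\<dots> = smult \<alpha>2 (Fop \<alpha>2 [:\<eta>2, \<xi>2:] (Tt f))"
    by (simp add: Tt_def conjF[OF \<xi>2] assms Tu_diff Tu_pderiv)
  finally show ?thesis .
qed

lemma Tt_inj: "Tt f = 0 \<Longrightarrow> f = 0"
proof -
  assume "Tt f = 0"
  then have "pcompose (Tt f) (ell \<eta>2 \<xi>2) = 0" by simp
  then have "Tu (\<eta>2 - \<eta>1) (pcompose f (ell \<eta>1 \<xi>1)) = 0"
    by (simp add: Tt_def comp_back2[OF \<xi>2])
  then have "pcompose f (ell \<eta>1 \<xi>1) = 0" by (rule Tu_inj)
  then have "pcompose (pcompose f (ell \<eta>1 \<xi>1)) [:\<eta>1, \<xi>1:] = 0" by simp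
  then show "f = 0" by (simp add: comp_back1[OF \<xi>1])
qed

lemma Tt_surj: "\<exists>f. Tt f = g"
proof -
  obtain F where F: "Tu (\<eta>2 - \<eta>1) F = pcompose g (ell \<eta>2 \<xi>2)" using Tu_surj by blast
  have "Tt (pcompose F [:\<eta>1, \<xi>1:]) = g"
    by (simp add: Tt_def comp_back2[OF \<xi>1] F comp_back1[OF \<xi>2])
  then show ?thesis by blast
qed

lemma span_h:
  "f = (\<Sum>k\<le>degree (pcompose f (ell \<eta>1 \<xi>1)). smult (coeff (pcompose f (ell \<eta>1 \<xi>1)) k) ([:\<eta>1, \<xi>1:] ^ k))"
proof -
  let ?F = "pcompose f (ell \<eta>1 \<xi>1)"
  have "?F = (\<Sum>k\<le>degree ?F. smult (coeff ?F k) (Xp ^ k))"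
    by (subst poly_as_sum_of_monoms[symmetric]) (simp add: monom_altdef)
  then have "pcompose ?F [:\<eta>1, \<xi>1:] = pcompose (\<Sum>k\<le>degree ?F. smult (coeff ?F k) (Xp ^ k)) [:\<eta>1, \<xi>1:]"
    by simp
  then show ?thesis
    by (simp add: comp_back1[OF \<xi>1] pcompose_sum pcompose_smult pcompose_X_power)
qed

end

lemma clinear_0: "clinear \<phi> \<Longrightarrow> \<phi> 0 = 0"
proof -
  assume "clinear \<phi>"
  then have "\<phi> (0 + 0) = \<phi> 0 + \<phi> 0" unfolding clinear_def by blast
  then show "\<phi> 0 = 0" by simp
qed
lemma clinear_add: "clinear \<phi> \<Longrightarrow> \<phi> (P + Q) = \<phi> P + \<phi> Q"
  unfolding clinear_def by blast
lemma clinear_cscale: "clinear \<phi> \<Longrightarrow> \<phi> (cscale a P) = cscale a (\<phi> P)"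
  unfolding clinear_def by blast
lemma clinear_diff: "clinear \<phi> \<Longrightarrow> \<phi> (P - Q) = \<phi> P - \<phi> Q"
  using clinear_add[of \<phi> "P - Q" Q] by simp
lemma clinear_sum: "clinear \<phi> \<Longrightarrow> \<phi> (\<Sum>i\<in>A. f i) = (\<Sum>i\<in>A. \<phi> (f i))"
  by (rule additive_sum) (rule clinear_add)

lemma cscale_cscale: "cscale a (cscale b P) = cscale (a * b) P"
  by (simp add: cscale_def mult.commute)
lemma cscale_1[simp]: "cscale 1 P = P"
  by (simp add: cscale_def one_pCons[symmetric])
lemma cscale_add: "cscale a (P + Q) = cscale a P + cscale a Q"
  by (simp add: cscale_def smult_add_right)
lemma cscale_diff: "cscale a (P - Q) = cscale a P - cscale a Q"
  by (simp add: cscale_def smult_diff_right)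

context twoh begin

definition phi0 :: "cts \<Rightarrow> cts" where "phi0 P = map_poly Tt P"

lemma coeff_phi0: "coeff (phi0 P) i = Tt (coeff P i)"
  by (simp add: phi0_def coeff_map_poly)

lemma phi0_add: "phi0 (P + Q) = phi0 P + phi0 Q"
  by (rule poly_eqI) (simp add: coeff_phi0 Tt_add)
lemma phi0_cscale: "phi0 (cscale a P) = cscale a (phi0 P)"
  by (rule poly_eqI) (simp add: coeff_phi0 cscale_def Tt_smult)

lemma clinear_phi0: "clinear phi0"
  unfolding clinear_def by (simp add: phi0_add phi0_cscale)

lemma phi0_monom: "phi0 (monom f i) = monom (Tt f) i"
  by (simp add: phi0_def map_poly_monom)

lemma phi0_bij: "bij phi0"
proof (rule bijI)
  show "inj phi0"
  proof (rule injI)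
    fix P Q assume "phi0 P = phi0 Q"
    then have "Tt (coeff P i - coeff Q i) = 0" for i
      by (metis Tt_diff coeff_phi0 diff_self)
    then show "P = Q" by (intro poly_eqI) (metis Tt_inj eq_iff_diff_eq_0)
  qed
  show "surj phi0"
  proof (rule surjI)
    fix Q
    define g where "g = (\<lambda>y. SOME f. Tt f = y)"
    have g: "Tt (g y) = y" for y unfolding g_def by (rule someI_ex) (rule Tt_surj)
    have g0: "g 0 = 0" using g[of 0] Tt_inj by blast
    show "phi0 (map_poly g Q) = Q"
      by (rule poly_eqI) (simp add: coeff_phi0 coeff_map_poly g0 g)
  qed
qed

lemma phi0_lin_factor: "phi0 (pCons [:a:] 1 * Q) = pCons [:a:] 1 * phi0 Q"
proof -
  have "phi0 (smult [:a:] Q) = smult [:a:] (phi0 Q)"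
    by (rule poly_eqI) (simp add: coeff_phi0 Tt_smult)
  moreover have "phi0 (pCons 0 Q) = pCons 0 (phi0 Q)"
    by (simp add: phi0_def map_poly_pCons)
  ultimately show ?thesis by (simp add: phi0_add)
qed

lemma phi0_lin_power: "phi0 (pCons [:a:] 1 ^ i * Q) = pCons [:a:] 1 ^ i * phi0 Q"
proof (induction i arbitrary: Q)
  case 0 then show ?case by simp
next
  case (Suc i)
  have "phi0 (pCons [:a:] 1 ^ Suc i * Q) = phi0 (pCons [:a:] 1 ^ i * (pCons [:a:] 1 * Q))"
    by (simp only: power_Suc mult.assoc mult.left_commute)
  also have "\<dots> = pCons [:a:] 1 ^ i * (pCons [:a:] 1 * phi0 Q)"
    by (simp only: Suc phi0_lin_factor)
  finally show ?case by (simp only: power_Suc mult.assoc mult.left_commute)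
qed

lemma phi0_tm:
  assumes "\<alpha>1 * \<xi>1 = \<alpha>2 * \<xi>2"
  shows "phi0 (tm \<alpha>1 [:\<eta>1, \<xi>1:] x f) = tm \<alpha>2 [:\<eta>2, \<xi>2:] x (Tt f)"
proof -
  have "Tt (smult x (Gop \<alpha>1 [:\<eta>1, \<xi>1:] f) - smult (x\<^sup>2 * \<alpha>1) (Fop \<alpha>1 [:\<eta>1, \<xi>1:] f))
     = smult x (Gop \<alpha>2 [:\<eta>2, \<xi>2:] (Tt f)) - smult (x\<^sup>2 * \<alpha>2) (Fop \<alpha>2 [:\<eta>2, \<xi>2:] (Tt f))"
  proof -
    have "smult (x\<^sup>2 * \<alpha>1) (Tt (Fop \<alpha>1 [:\<eta>1, \<xi>1:] f)) = smult (x\<^sup>2 * \<alpha>2) (Fop \<alpha>2 [:\<eta>2, \<xi>2:] (Tt f))"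
      using Tt_F[OF assms, of f] by (metis smult_smult)
    then show ?thesis by (simp add: Tt_diff Tt_smult Tt_G[OF assms])
  qed
  then show ?thesis
    by (simp add: tm_def phi0_def map_poly_pCons)
qed

lemma phi0_Dx:
  assumes "\<alpha>1 * \<xi>1 = \<alpha>2 * \<xi>2"
  shows "phi0 (Dx \<alpha>1 [:\<eta>1, \<xi>1:] x P) = Dx \<alpha>2 [:\<eta>2, \<xi>2:] x (phi0 P)"
proof -
  have d: "degree (phi0 P) \<le> degree P" by (simp add: phi0_def map_poly_degree_leq)
  have "phi0 (Dx \<alpha>1 [:\<eta>1, \<xi>1:] x P)
     = (\<Sum>i\<le>degree P. phi0 (pCons [:-x:] 1 ^ i * tm \<alpha>1 [:\<eta>1, \<xi>1:] x (coeff P i)))"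
    unfolding Dx_def by (rule clinear_sum[OF clinear_phi0])
  also have "\<dots> = (\<Sum>i\<le>degree P. pCons [:-x:] 1 ^ i * tm \<alpha>2 [:\<eta>2, \<xi>2:] x (coeff (phi0 P) i))"
    by (simp add: phi0_lin_power phi0_tm[OF assms] coeff_phi0)
  also have "\<dots> = Dx \<alpha>2 [:\<eta>2, \<xi>2:] x (phi0 P)"
    by (rule Dx_bound[OF d, symmetric])
  finally show ?thesis .
qed

lemma phi0_omega:
  assumes "\<alpha>1 * \<xi>1 = \<alpha>2 * \<xi>2"
  shows "phi0 (omega_act l \<alpha>1 [:\<eta>1, \<xi>1:] v P) = omega_act l \<alpha>2 [:\<eta>2, \<xi>2:] v (phi0 P)"
proof (cases v)
  case (Dvir m)
  then show ?thesis
    using phi0_cscale[of "l powi m"] by (simp add: omega_d_Dx phi0_Dx[OF assms] cscale_def)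
next
  case Cvir
  then show ?thesis using clinear_0[OF clinear_phi0] by simp
qed

end

lemma coeff_poly_const:
  "coeff (poly W [:z:]) j = poly (map_poly (\<lambda>f. coeff f j) W) z"
  by (induction W) (simp_all add: map_poly_pCons)

lemma poly_map_lin:
  fixes L :: "complex poly \<Rightarrow> complex poly"
  assumes "\<And>a b. L (a + b) = L a + L b" "\<And>c a. L (smult c a) = smult c (L a)"
  shows "poly (map_poly L W) [:k:] = L (poly W [:k:])"
proof -
  have L0: "L 0 = 0" using assms(2)[of 0 0] by simp
  show ?thesis
    by (induction W) (simp_all add: map_poly_pCons L0 assms)
qed

lemma cscale_inj: "c \<noteq> 0 \<Longrightarrow> cscale c P = cscale c Q \<Longrightarrow> P = Q"
proof -
  assume c: "c \<noteq> 0" and e: "cscale c P = cscale c Q"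
  have "cscale (1/c) (cscale c P) = cscale (1/c) (cscale c Q)" using e by simp
  then show "P = Q" using c by (simp add: cscale_cscale)
qed

lemma Dx_of_0[simp]: "Dx \<alpha> h x 0 = 0"
  by (simp add: Dx_def)

lemma Flin_zero:
  assumes "\<xi> \<noteq> 0" "smult \<xi> f = pderiv (f :: complex poly)"
  shows "f = 0"
proof (rule ccontr)
  assume "f \<noteq> 0"
  let ?n = "degree f"
  have "coeff (pderiv f) ?n = 0" by (simp add: coeff_pderiv coeff_eq_0)
  then have "\<xi> * lead_coeff f = 0" using assms(2) by (metis coeff_smult)
  then show False using \<open>f \<noteq> 0\<close> assms(1) by simp
qed

lemma const_step:
  fixes w0 :: "complex poly"
  assumes "smult c1 w0 = smult \<alpha>2 (smult \<xi>2 w0 - pderiv w0)" "w0 \<noteq> 0" "\<alpha>2 \<noteq> 0"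
  shows "c1 = \<alpha>2 * \<xi>2" "degree w0 = 0"
proof -
  let ?n = "degree w0"
  have "coeff (pderiv w0) ?n = 0" by (simp add: coeff_pderiv coeff_eq_0)
  then have "c1 * lead_coeff w0 = \<alpha>2 * \<xi>2 * lead_coeff w0"
    using arg_cong[OF assms(1), of "\<lambda>p. coeff p ?n"] by (simp add: algebra_simps)
  then show c: "c1 = \<alpha>2 * \<xi>2" using assms(2) by simp
  then have "smult \<alpha>2 (pderiv w0) = 0" using assms(1)
    by (simp add: smult_diff_right)
  then have "pderiv w0 = 0" using assms(3) by simp
  then show "degree w0 = 0" by (simp add: pderiv_eq_0_iff)
qed

locale homsetup = twoh +
  fixes l1 l2 \<alpha>1 \<alpha>2 :: complex and \<psi> :: "cts \<Rightarrow> cts"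
  assumes l1: "l1 \<noteq> 0" and l2: "l2 \<noteq> 0" and a1: "\<alpha>1 \<noteq> 0" and a2: "\<alpha>2 \<noteq> 0"
    and lin: "clinear \<psi>"
    and hom: "\<And>v P. \<psi> (omega_act l1 \<alpha>1 [:\<eta>1, \<xi>1:] v P) = omega_act l2 \<alpha>2 [:\<eta>2, \<xi>2:] v (\<psi> P)"
begin

abbreviation "h1 \<equiv> [:\<eta>1, \<xi>1:]"
abbreviation "h2 \<equiv> [:\<eta>2, \<xi>2:]"

lemma hom_Dx: "cscale (l1 powi m) (\<psi> (Dx \<alpha>1 h1 (of_int m) P)) = cscale (l2 powi m) (Dx \<alpha>2 h2 (of_int m) (\<psi> P))"
  using hom[of "Dvir m" P] clinear_cscale[OF lin] by (simp add: omega_d_Dx cscale_def)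

lemma psi_s: "\<psi> ([:0,1:] * P) = [:0,1:] * \<psi> P"
  using hom_Dx[of 0 P] by (simp add: Dx_zero)

lemma psi_s': "\<psi> (pCons 0 P) = pCons 0 (\<psi> P)"
  using psi_s[of P] by simp

lemma psi_monom: "\<psi> (monom f i) = [:0,1:] ^ i * \<psi> [:f:]"
proof (induction i)
  case 0 then show ?case by (simp add: monom_0)
next
  case (Suc i)
  have "monom f (Suc i) = [:0,1:] * monom f i" by (simp add: monom_Suc)
  then show ?case using Suc by (simp add: psi_s')
qed

lemma psi_const_add: "\<psi> [:f + g:] = \<psi> [:f:] + \<psi> [:g:]"
  using clinear_add[OF lin, of "[:f:]" "[:g:]"] by simp
lemma psi_const_smult: "\<psi> [:smult a f:] = cscale a (\<psi> [:f:])"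
  using clinear_cscale[OF lin, of a "[:f:]"] by (simp add: cscale_def)

lemma cscale_0[simp]: "cscale c 0 = 0" by (simp add: cscale_def)

lemma smult2: "smult (2::complex) p = p + p"
  by (metis one_add_one smult_add_left smult_1_left)

lemma G_step: "\<psi> [:f:] = 0 \<Longrightarrow> \<psi> [:Gop \<alpha>1 h1 f:] = 0"
proof -
  assume f0: "\<psi> [:f:] = 0"
  have z: "\<psi> (Dx \<alpha>1 h1 (of_int m) [:f:]) = 0" for m
  proof -
    have "cscale (l1 powi m) (\<psi> (Dx \<alpha>1 h1 (of_int m) [:f:])) = cscale (l1 powi m) 0"
      using hom_Dx[of m "[:f:]"] unfolding f0 Dx_of_0 cscale_0 .
    then show ?thesis by (rule cscale_inj[rotated]) (use l1 in simp)
  qed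
  have e: "Dx \<alpha>1 h1 1 [:f:] - Dx \<alpha>1 h1 (-1) [:f:] = cscale 2 [:Gop \<alpha>1 h1 f:]"
    by (simp add: Dx_const tm_def cscale_def numeral_poly)
  have "\<psi> (Dx \<alpha>1 h1 1 [:f:] - Dx \<alpha>1 h1 (-1) [:f:]) = 0"
    using z[of 1] z[of "-1"] clinear_diff[OF lin] by simp
  then have "cscale 2 (\<psi> [:Gop \<alpha>1 h1 f:]) = 0"
    unfolding e clinear_cscale[OF lin] .
  then show ?thesis by (simp add: cscale_def)
qed

lemma basis_G0: "Gop \<alpha>1 h1 1 = [:\<alpha>1*\<xi>1:] + h1"
proof -
  have "Gop \<alpha>1 h1 1 = Gop \<alpha>1 h1 (pcompose 1 h1)" by (simp add: pcompose_1)
  also have "\<dots> = pcompose (Gt \<eta>1 (\<alpha>1 * \<xi>1) 1) h1" by (rule conjG[OF \<xi>1])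
  also have "Gt \<eta>1 (\<alpha>1 * \<xi>1) 1 = [:\<alpha>1*\<xi>1:] + Xp" by (simp add: Gt_def algebra_simps)
  finally show ?thesis by (simp add: pcompose_add pcompose_pCons)
qed

lemma basis_G: "Gop \<alpha>1 h1 (h1^Suc m) = h1^Suc (Suc m) + smult (\<alpha>1*\<xi>1) (h1^Suc m)
   - smult (of_nat (Suc m)) (h1^Suc m) + smult (of_nat (Suc m) * \<eta>1) (h1^m)"
proof -
  have "Gop \<alpha>1 h1 (h1^Suc m) = Gop \<alpha>1 h1 (pcompose (Xp^Suc m) h1)" by (simp only: pcompose_X_power)
  also have "\<dots> = pcompose (Gt \<eta>1 (\<alpha>1 * \<xi>1) (Xp^Suc m)) h1" by (rule conjG[OF \<xi>1])
  finally show ?thesis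
    by (simp only: Gt_X_power pcompose_add pcompose_diff pcompose_smult pcompose_X_power)
qed

lemma const_sum: fixes f :: "_ \<Rightarrow> complex poly" shows "[:(\<Sum>i\<in>A. f i):] = (\<Sum>i\<in>A. [:f i:])"
  by (rule additive_sum[where L="\<lambda>x. [:x:]"]) simp

lemma lin_comb_zero:
  fixes L :: "complex poly \<Rightarrow> cts"
  assumes "L (A + smult a B - smult b B + smult e C) = 0"
    "\<And>f g. L (f+g) = L f + L g" "\<And>c f. L (smult c f) = cscale c (L f)" "L B = 0" "L C = 0"
  shows "L A = 0"
proof -
  have d: "L (f - g) = L f - L g" for f g using assms(2)[of "f - g" g] by simp
  show ?thesis using assms(1) by (simp add: d assms(2-5))
qed

lemma det_basis: "\<psi> 1 = 0 \<Longrightarrow> \<psi> [:h1^n:] = 0 \<and> \<psi> [:h1^Suc n:] = 0"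
proof (induction n)
  case 0
  have one: "\<psi> [:1:] = 0" using 0 by (simp add: one_pCons[symmetric])
  have "\<psi> [:Gop \<alpha>1 h1 1:] = 0" by (rule G_step[OF one])
  then have "\<psi> [:smult (\<alpha>1*\<xi>1) 1:] + \<psi> [:h1:] = 0"
    unfolding basis_G0 psi_const_add by simp
  moreover have "\<psi> [:smult (\<alpha>1*\<xi>1) 1:] = 0" using psi_const_smult[of "\<alpha>1*\<xi>1" 1] one by simp
  ultimately show ?case using one by simp
next
  case (Suc n)
  then have a: "\<psi> [:h1^n:] = 0" and b: "\<psi> [:h1^Suc n:] = 0" by auto
  have "\<psi> [:Gop \<alpha>1 h1 (h1^Suc n):] = 0" by (rule G_step[OF b])
  then have "\<psi> [:h1^Suc (Suc n):] = 0"
    unfolding basis_G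
    by (rule lin_comb_zero[where L="\<lambda>f. \<psi> [:f:]"]) (simp_all only: psi_const_add psi_const_smult a b)
  then show ?case using b by simp
qed

lemma det: "\<psi> 1 = 0 \<Longrightarrow> \<psi> P = 0"
proof -
  assume z: "\<psi> 1 = 0"
  have c: "\<psi> [:f:] = 0" for f
  proof -
    have "\<psi> [:f:] = \<psi> (\<Sum>k\<le>degree (pcompose f (ell \<eta>1 \<xi>1)). [:smult (coeff (pcompose f (ell \<eta>1 \<xi>1)) k) (h1 ^ k):])"
      by (subst span_h) (simp only: const_sum)
    also have "\<dots> = 0"
      by (simp add: clinear_sum[OF lin] psi_const_smult det_basis[OF z])
    finally show ?thesis .
  qed
  have "\<psi> P = \<psi> (\<Sum>i\<le>degree P. monom (coeff P i) i)" by (simp add: poly_as_sum_of_monoms)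
  also have "\<dots> = 0" by (simp add: clinear_sum[OF lin] psi_monom c)
  finally show ?thesis .
qed

end

lemma poly_cscale: "poly (cscale c W) [:z:] = smult c (poly W [:z:])"
  by (simp add: cscale_def)

context homsetup begin

definition "Aa = [:Gop \<alpha>1 h1 1:]"
definition "Bb = [:Fop \<alpha>1 h1 1:]"

lemma Dx1_one: "Dx \<alpha>1 h1 x 1 = [:0,1:] + cscale x Aa - cscale (x^2*\<alpha>1) Bb"
proof -
  have "Dx \<alpha>1 h1 x 1 = tm \<alpha>1 h1 x 1" using Dx_const[of \<alpha>1 h1 x 1] by (simp add: one_pCons)
  then show ?thesis by (simp add: tm_def Aa_def Bb_def cscale_def one_pCons)
qed

lemma psi_Dx1_one: "\<psi> (Dx \<alpha>1 h1 x 1) = [:0,1:] * \<psi> 1 + cscale x (\<psi> Aa) - cscale (x^2*\<alpha>1) (\<psi> Bb)"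
  unfolding Dx1_one using psi_s[of 1]
  by (simp add: clinear_add[OF lin] clinear_diff[OF lin] clinear_cscale[OF lin])

lemma lam_eq:
  assumes w: "\<psi> 1 \<noteq> 0"
  shows "l1 = l2"
proof (rule ccontr)
  assume ne: "l1 \<noteq> l2"
  let ?w = "\<psi> 1"
  have key: "coeff (poly ?w [:y:]) j = 0" if y: "y \<noteq> 0" for y j
  proof -
    define cj where "cj W = pcompose (map_poly (\<lambda>f. coeff f j) W) [:y, 1:]" for W :: cts
    have cj: "coeff (poly W [:of_nat m + y:]) j = poly (cj W) (of_nat m)" for W m
      by (simp add: cj_def coeff_poly_const poly_pcompose add.commute)
    let ?a = "poly ?w [:y:]"
    define p where "p = [:y, 1:] * cj ?w + [:0, 1:] * cj (\<psi> Aa) - smult \<alpha>1 ([:0, 0, 1:] * cj (\<psi> Bb))"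
    define q where "q = [:y * coeff ?a j, coeff ?a j + coeff (Gop \<alpha>2 h2 ?a) j, - (\<alpha>2 * coeff (Fop \<alpha>2 h2 ?a) j):]"
    have eq: "(l2 / l1)^m * poly q (of_nat m) = poly p (of_nat m)" for m :: nat
    proof -
      have E: "cscale (l1 ^ m) (\<psi> (Dx \<alpha>1 h1 (of_nat m) 1)) = cscale (l2 ^ m) (Dx \<alpha>2 h2 (of_nat m) ?w)"
        using hom_Dx[of "int m" 1] by simp
      have L: "coeff (poly (cscale (l1 ^ m) (\<psi> (Dx \<alpha>1 h1 (of_nat m) 1))) [:of_nat m + y:]) j
          = l1 ^ m * poly p (of_nat m)"
        unfolding psi_Dx1_one poly_cscale
        by (simp add: poly_cscale p_def cj_def coeff_poly_const poly_pcompose algebra_simps power2_eq_square)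
      have R: "coeff (poly (cscale (l2 ^ m) (Dx \<alpha>2 h2 (of_nat m) ?w)) [:of_nat m + y:]) j
          = l2 ^ m * poly q (of_nat m)"
        unfolding poly_cscale Dx_eval
        by (simp add: q_def algebra_simps power2_eq_square)
      have "l1 ^ m * poly p (of_nat m) = l2 ^ m * poly q (of_nat m)"
        using arg_cong[OF E, of "\<lambda>W. coeff (poly W [:of_nat m + y:]) j"] L R by simp
      then show ?thesis using l1 by (simp add: power_divide field_simps)
    qed
    have "q = 0"
    proof (rule exp_poly[OF _ _ eq])
      show "l2 / l1 \<noteq> 1" using ne l1 by (simp add: field_simps)
      show "l2 / l1 \<noteq> 0" using l1 l2 by simp
    qed
    then have "y * coeff ?a j = 0" by (metis coeff_pCons_0 coeff_0 q_def)
    then show ?thesis using y by simp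
  qed
  have "?w = 0"
  proof (rule poly_eqI)
    fix i
    show "coeff ?w i = coeff 0 i"
    proof (rule poly_eqI)
      fix j
      have "map_poly (\<lambda>f. coeff f j) ?w = 0"
        by (rule poly_inf_roots[where g="of_nat"]) (auto simp: inj_def coeff_poly_const[symmetric] key)
      then have "coeff (map_poly (\<lambda>f. coeff f j) ?w) i = 0" by simp
      then show "coeff (coeff ?w i) j = coeff (coeff 0 i) j" by (simp add: coeff_map_poly)
    qed
  qed
  then show False using w by simp
qed

end

lemma poly_cscale0: "poly (cscale c W) 0 = smult c (poly W 0)"
  by (simp add: cscale_def)

context homsetup begin

lemma hom_eq:
  assumes "l1 = l2"
  shows "\<psi> (Dx \<alpha>1 h1 (of_int m) P) = Dx \<alpha>2 h2 (of_int m) (\<psi> P)"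
proof (rule cscale_inj[of "l1 powi m"])
  show "l1 powi m \<noteq> 0" using l1 by simp
  show "cscale (l1 powi m) (\<psi> (Dx \<alpha>1 h1 (of_int m) P)) = cscale (l1 powi m) (Dx \<alpha>2 h2 (of_int m) (\<psi> P))"
    using hom_Dx[of m P] assms by simp
qed

lemma Fop2_lead:
  assumes "smult \<alpha>2 (Fop \<alpha>2 h2 f) = 0"
  shows "f = 0"
proof -
  have "Fop \<alpha>2 h2 f = 0" using assms a2 by simp
  then have "smult \<xi>2 f = pderiv f" using Fop_lin[OF \<xi>2] by simp
  then show ?thesis using Flin_zero[OF \<xi>2] by blast
qed

lemma w_deg0:
  assumes "l1 = l2"
  shows "degree (\<psi> 1) = 0"
proof (rule ccontr)
  assume nd: "degree (\<psi> 1) \<noteq> 0"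
  let ?w = "\<psi> 1"
  let ?e1 = "poly (\<psi> Aa) [:0:]" and ?e2 = "poly (\<psi> Bb) [:0:]"
  define M1 where "M1 = map_poly (Gop \<alpha>2 h2) ?w"
  define M2 where "M2 = map_poly (\<lambda>f. smult \<alpha>2 (Fop \<alpha>2 h2 f)) ?w"
  define R where "R = [:0, - ?e1, - smult \<alpha>1 ?e2:] + [:0,1:] * M1 + [:0,0,1:] * M2"
  have M1: "poly M1 [:k:] = Gop \<alpha>2 h2 (poly ?w [:k:])" for k
    unfolding M1_def by (rule poly_map_lin) (simp_all add: Gop_add Gop_smult)
  have M2: "poly M2 [:k:] = smult \<alpha>2 (Fop \<alpha>2 h2 (poly ?w [:k:]))" for k
    unfolding M2_def by (rule poly_map_lin) (simp_all add: Fop_add Fop_smult smult_add_right mult.commute)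
  have "R = 0"
  proof (rule poly_inf_roots[where g="\<lambda>k. [:of_nat k:]"])
    show "inj (\<lambda>k::nat. [:of_nat k :: complex:])" by (auto simp: inj_def)
    fix k :: nat assume "k \<ge> 1"
    let ?x = "- of_nat k :: complex"
    have E: "\<psi> (Dx \<alpha>1 h1 ?x 1) = Dx \<alpha>2 h2 ?x ?w"
      using hom_eq[OF assms, of "- int k" 1] by simp
    have "poly (\<psi> (Dx \<alpha>1 h1 ?x 1)) [:0:] = smult ?x ?e1 - smult (?x^2 * \<alpha>1) ?e2"
      unfolding psi_Dx1_one by (simp add: poly_cscale poly_cscale0)
    moreover have "poly (Dx \<alpha>2 h2 ?x ?w) [:0:] = smult ?x (Gop \<alpha>2 h2 (poly ?w [:of_nat k:]))
        - smult (?x^2 * \<alpha>2) (Fop \<alpha>2 h2 (poly ?w [:of_nat k:]))"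
      unfolding Dx_eval by simp
    ultimately have "smult ?x ?e1 - smult (?x^2 * \<alpha>1) ?e2 = smult ?x (Gop \<alpha>2 h2 (poly ?w [:of_nat k:]))
        - smult (?x^2 * \<alpha>2) (Fop \<alpha>2 h2 (poly ?w [:of_nat k:]))" using E by simp
    then show "poly R [:of_nat k:] = 0"
      by (simp add: R_def M1 M2 algebra_simps power2_eq_square smult_diff_right)
  qed
  let ?N = "degree ?w"
  have "coeff R (Suc (Suc ?N)) = smult \<alpha>2 (Fop \<alpha>2 h2 (lead_coeff ?w))"
    using nd by (simp add: R_def M1_def M2_def coeff_map_poly coeff_eq_0)
  then have "smult \<alpha>2 (Fop \<alpha>2 h2 (lead_coeff ?w)) = 0" using \<open>R = 0\<close> by simp
  then have "lead_coeff ?w = 0" by (rule Fop2_lead)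
  then show False using nd by simp
qed

lemma w_struct:
  assumes w: "\<psi> 1 \<noteq> 0"
  shows "l1 = l2" "\<alpha>1 * \<xi>1 = \<alpha>2 * \<xi>2" "\<exists>a. a \<noteq> 0 \<and> \<psi> 1 = [:[:a:]:]"
proof -
  show l: "l1 = l2" by (rule lam_eq[OF w])
  obtain w0 where w0: "\<psi> 1 = [:w0:]" using w_deg0[OF l] by (metis degree_0_id)
  have w0nz: "w0 \<noteq> 0" using w w0 by simp
  have F1: "Fop \<alpha>1 h1 1 = [:\<xi>1:]" by (simp add: Fop_lin[OF \<xi>1])
  have psiB: "\<psi> Bb = cscale \<xi>1 (\<psi> 1)"
  proof -
    have "Bb = cscale \<xi>1 1" unfolding Bb_def F1 by (simp add: cscale_def)
    then show ?thesis using clinear_cscale[OF lin, of \<xi>1 1] by simp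
  qed
  let ?b = "coeff (\<psi> Aa) 0"
  have eqx: "smult x ?b - smult (x^2 * \<alpha>1 * \<xi>1) w0
      = smult x (Gop \<alpha>2 h2 w0) - smult (x^2 * \<alpha>2) (Fop \<alpha>2 h2 w0)" if "x = 1 \<or> x = -1" for x
  proof -
    have "\<exists>m::int. x = of_int m"
    proof (cases "x = 1")
      case True then show ?thesis by (intro exI[of _ 1]) simp
    next
      case False then have "x = -1" using that by simp
      then show ?thesis by (intro exI[of _ "-1"]) simp
    qed
    then obtain m :: int where m: "x = of_int m" by blast
    have E: "\<psi> (Dx \<alpha>1 h1 x 1) = Dx \<alpha>2 h2 x [:w0:]"
      using hom_eq[OF l, of m 1] w0 m by simp
    have "coeff (\<psi> (Dx \<alpha>1 h1 x 1)) 0 = smult x ?b - smult (x^2 * \<alpha>1 * \<xi>1) w0"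
      unfolding psi_Dx1_one psiB w0 by (simp add: cscale_def mult_ac)
    moreover have "coeff (Dx \<alpha>2 h2 x [:w0:]) 0 = smult x (Gop \<alpha>2 h2 w0) - smult (x^2 * \<alpha>2) (Fop \<alpha>2 h2 w0)"
      by (simp add: Dx_const tm_def)
    ultimately show ?thesis using E by simp
  qed
  have "smult (\<alpha>1 * \<xi>1) w0 = smult \<alpha>2 (Fop \<alpha>2 h2 w0)"
  proof -
    have "(smult 1 ?b - smult (1^2 * \<alpha>1 * \<xi>1) w0) + (smult (-1) ?b - smult ((-1)^2 * \<alpha>1 * \<xi>1) w0)
      = (smult 1 (Gop \<alpha>2 h2 w0) - smult (1^2 * \<alpha>2) (Fop \<alpha>2 h2 w0))
        + (smult (-1) (Gop \<alpha>2 h2 w0) - smult ((-1)^2 * \<alpha>2) (Fop \<alpha>2 h2 w0))"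
      using eqx[of 1] eqx[of "-1"] by simp
    then have "smult 2 (smult (\<alpha>1 * \<xi>1) w0) = smult 2 (smult \<alpha>2 (Fop \<alpha>2 h2 w0))"
      by (simp add: numeral_poly mult.commute)
    then have "smult (1/2) (smult (2 * (\<alpha>1 * \<xi>1)) w0) = smult (1/2) (smult (2 * \<alpha>2) (Fop \<alpha>2 h2 w0))"
      by simp
    then show ?thesis by simp
  qed
  then have "smult (\<alpha>1 * \<xi>1) w0 = smult \<alpha>2 (smult \<xi>2 w0 - pderiv w0)" by (simp add: Fop_lin[OF \<xi>2])
  note cs = const_step[OF this w0nz a2]
  show "\<alpha>1 * \<xi>1 = \<alpha>2 * \<xi>2" by (rule cs(1))
  obtain a where "w0 = [:a:]" using cs(2) by (metis degree_0_id)
  then show "\<exists>a. a \<noteq> 0 \<and> \<psi> 1 = [:[:a:]:]" using w0 w0nz by auto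
qed

end

lemma omega_act_diff: "omega_act l \<alpha> h v (P - Q) = omega_act l \<alpha> h v P - omega_act l \<alpha> h v Q"
  by (cases v) (simp_all add: omega_d_Dx Dx_diff smult_diff_right)

lemma omega_act_cscale: "omega_act l \<alpha> h v (cscale a P) = cscale a (omega_act l \<alpha> h v P)"
proof (cases v)
  case (Dvir m)
  have "smult [:l powi m:] (cscale a X) = cscale a (smult [:l powi m:] X)" for X
    by (simp add: cscale_def mult.commute)
  then show ?thesis using Dvir by (simp add: omega_d_Dx Dx_cscale)
qed (simp add: cscale_def)

lemma clinear_comb:
  assumes "clinear \<phi>" "clinear \<chi>"
  shows "clinear (\<lambda>P. \<phi> P - cscale a (\<chi> P))"
  using assms unfolding clinear_def
  by (simp add: cscale_add cscale_diff cscale_cscale mult.commute)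

lemma clinear_scaled:
  assumes "clinear \<chi>"
  shows "clinear (\<lambda>P. cscale a (\<chi> P))"
  using assms unfolding clinear_def
  by (simp add: cscale_add cscale_cscale mult.commute)

lemma iso_homsetup:
  assumes "omega_iso l1 \<alpha>1 [:\<eta>1, \<xi>1:] l2 \<alpha>2 [:\<eta>2, \<xi>2:] \<psi>"
    "l1 \<noteq> 0" "l2 \<noteq> 0" "\<alpha>1 \<noteq> 0" "\<alpha>2 \<noteq> 0" "\<xi>1 \<noteq> 0" "\<xi>2 \<noteq> 0"
  shows "homsetup \<eta>1 \<xi>1 \<eta>2 \<xi>2 l1 l2 \<alpha>1 \<alpha>2 \<psi>" "\<psi> 1 \<noteq> 0"
proof -
  show "homsetup \<eta>1 \<xi>1 \<eta>2 \<xi>2 l1 l2 \<alpha>1 \<alpha>2 \<psi>"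
    using assms unfolding omega_iso_def homsetup_def homsetup_axioms_def twoh_def by blast
  have "inj \<psi>" "\<psi> 0 = 0" using assms(1) clinear_0 unfolding omega_iso_def bij_def by blast+
  then show "\<psi> 1 \<noteq> 0" by (metis injD one_neq_zero)
qed

context twoh begin

lemma phi0_one: "phi0 1 = 1"
proof -
  have "phi0 1 = phi0 (monom ([:\<eta>1, \<xi>1:] ^ 0) 0)" by (simp add: monom_0 one_pCons)
  also have "\<dots> = monom (gpoly (\<eta>2 - \<eta>1) 0 [:\<eta>2, \<xi>2:]) 0" by (simp only: phi0_monom Tt_h_power)
  also have "\<dots> = 1" by (simp add: gpoly_def monom_0 one_pCons)
  finally show ?thesis .
qed

lemma phi0_basis: "phi0 (monom ([:\<eta>1, \<xi>1:] ^ n) i) = monom (gpoly (\<eta>2 - \<eta>1) n [:\<eta>2, \<xi>2:]) i"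
  by (simp only: phi0_monom Tt_h_power)

lemma agree:
  assumes "clinear \<phi>" "clinear \<chi>" "\<And>n i. \<phi> (monom ([:\<eta>1, \<xi>1:] ^ n) i) = \<chi> (monom ([:\<eta>1, \<xi>1:] ^ n) i)"
  shows "\<phi> P = \<chi> P"
proof -
  have m: "\<theta> (monom f i) = (\<Sum>k\<le>degree (pcompose f (ell \<eta>1 \<xi>1)).
      cscale (coeff (pcompose f (ell \<eta>1 \<xi>1)) k) (\<theta> (monom ([:\<eta>1, \<xi>1:] ^ k) i)))"
    if "clinear \<theta>" for \<theta> f i
  proof -
    have "monom f i = (\<Sum>k\<le>degree (pcompose f (ell \<eta>1 \<xi>1)).
        cscale (coeff (pcompose f (ell \<eta>1 \<xi>1)) k) (monom ([:\<eta>1, \<xi>1:] ^ k) i))"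
      by (subst span_h) (simp add: monom_sum cscale_def smult_monom)
    then show ?thesis by (simp add: clinear_sum[OF that] clinear_cscale[OF that])
  qed
  have "\<phi> P = \<phi> (\<Sum>i\<le>degree P. monom (coeff P i) i)" by (simp add: poly_as_sum_of_monoms)
  also have "\<dots> = (\<Sum>i\<le>degree P. \<phi> (monom (coeff P i) i))" by (rule clinear_sum[OF assms(1)])
  also have "\<dots> = (\<Sum>i\<le>degree P. \<chi> (monom (coeff P i) i))"
  proof (rule sum.cong[OF refl])
    fix i
    note a = m[OF assms(1), of "coeff P i" i] and b = m[OF assms(2), of "coeff P i" i]
    show "\<phi> (monom (coeff P i) i) = \<chi> (monom (coeff P i) i)" unfolding a b by (simp only: assms(3))
  qed
  also have "\<dots> = \<chi> (\<Sum>i\<le>degree P. monom (coeff P i) i)" by (rule clinear_sum[OF assms(2), symmetric])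
  finally show ?thesis by (simp add: poly_as_sum_of_monoms)
qed

lemma scaled_iso:
  assumes "c \<noteq> 0" "\<alpha>1 * \<xi>1 = \<alpha>2 * \<xi>2"
  shows "omega_iso l \<alpha>1 [:\<eta>1, \<xi>1:] l \<alpha>2 [:\<eta>2, \<xi>2:] (\<lambda>P. cscale c (phi0 P))"
  unfolding omega_iso_def
proof (intro conjI allI)
  show "clinear (\<lambda>P. cscale c (phi0 P))" by (rule clinear_scaled[OF clinear_phi0])
  show "bij (\<lambda>P. cscale c (phi0 P))"
  proof (rule bijI)
    show "inj (\<lambda>P. cscale c (phi0 P))"
      using phi0_bij assms(1) by (auto simp: inj_def bij_def dest: cscale_inj)
    show "surj (\<lambda>P. cscale c (phi0 P))"
    proof (rule surjI)
      fix Q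
      obtain P where "phi0 P = cscale (1/c) Q" using phi0_bij by (metis bij_pointE)
      then show "cscale c (phi0 (inv phi0 (cscale (1/c) Q))) = Q"
        using phi0_bij assms(1) by (simp add: bij_is_surj surj_f_inv_f cscale_cscale)
    qed
  qed
  fix v P
  show "cscale c (phi0 (omega_act l \<alpha>1 [:\<eta>1, \<xi>1:] v P)) = omega_act l \<alpha>2 [:\<eta>2, \<xi>2:] v (cscale c (phi0 P))"
    by (simp add: phi0_omega[OF assms(2)] omega_act_cscale)
qed

end

theorem corollary3p5:
  fixes l1 l2 \<alpha>1 \<alpha>2 \<xi>1 \<xi>2 \<eta>1 \<eta>2 :: complex and h1 h2 :: "complex poly"
  assumes "l1 \<noteq> 0" "l2 \<noteq> 0" "\<alpha>1 \<noteq> 0" "\<alpha>2 \<noteq> 0" "\<xi>1 \<noteq> 0" "\<xi>2 \<noteq> 0"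
    and "h1 = [:\<eta>1, \<xi>1:]" and "h2 = [:\<eta>2, \<xi>2:]"
  shows "(omega_isomorphic l1 \<alpha>1 h1 l2 \<alpha>2 h2 \<longleftrightarrow> l1 = l2 \<and> \<alpha>1 * \<xi>1 = \<alpha>2 * \<xi>2)
    \<and> (l1 = l2 \<and> \<alpha>1 * \<xi>1 = \<alpha>2 * \<xi>2 \<longrightarrow>
        (\<exists>\<phi>. clinear \<phi> \<and>
           (\<forall>n i. \<phi> (monom (h1 ^ n) i) = monom (gpoly (\<eta>2 - \<eta>1) n h2) i))
      \<and> (\<forall>\<phi>. clinear \<phi> \<and>
           (\<forall>n i. \<phi> (monom (h1 ^ n) i) = monom (gpoly (\<eta>2 - \<eta>1) n h2) i) \<longrightarrow>
           (\<forall>\<psi>. omega_iso l1 \<alpha>1 h1 l2 \<alpha>2 h2 \<psi> \<longleftrightarrow>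
                 (\<exists>c. c \<noteq> 0 \<and> (\<forall>P. \<psi> P = cscale c (\<phi> P))))))"
proof -
  interpret T: twoh \<eta>1 \<xi>1 \<eta>2 \<xi>2 by unfold_locales (use assms in auto)
  have hs: "homsetup \<eta>1 \<xi>1 \<eta>2 \<xi>2 l1 l2 \<alpha>1 \<alpha>2 \<psi>" "\<psi> 1 \<noteq> 0"
    if "omega_iso l1 \<alpha>1 h1 l2 \<alpha>2 h2 \<psi>" for \<psi>
    using iso_homsetup[of l1 \<alpha>1 \<eta>1 \<xi>1 l2 \<alpha>2 \<eta>2 \<xi>2 \<psi>] that assms by auto
  have cond: "l1 = l2 \<and> \<alpha>1 * \<xi>1 = \<alpha>2 * \<xi>2" if "omega_iso l1 \<alpha>1 h1 l2 \<alpha>2 h2 \<psi>" for \<psi>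
    using homsetup.w_struct(1,2)[OF hs[OF that]] by blast
  have phi0_iso: "omega_iso l1 \<alpha>1 h1 l2 \<alpha>2 h2 (\<lambda>P. cscale c (T.phi0 P))"
    if "l1 = l2" "\<alpha>1 * \<xi>1 = \<alpha>2 * \<xi>2" "c \<noteq> 0" for c
    using T.scaled_iso[OF that(3) that(2), of l1] that(1) assms(7,8) by simp
  have part1: "omega_isomorphic l1 \<alpha>1 h1 l2 \<alpha>2 h2 \<longleftrightarrow> l1 = l2 \<and> \<alpha>1 * \<xi>1 = \<alpha>2 * \<xi>2"
  proof
    assume "omega_isomorphic l1 \<alpha>1 h1 l2 \<alpha>2 h2"
    then obtain \<psi> where "omega_iso l1 \<alpha>1 h1 l2 \<alpha>2 h2 \<psi>" unfolding omega_isomorphic_def by blast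
    then show "l1 = l2 \<and> \<alpha>1 * \<xi>1 = \<alpha>2 * \<xi>2" by (rule cond)
  next
    assume "l1 = l2 \<and> \<alpha>1 * \<xi>1 = \<alpha>2 * \<xi>2"
    then show "omega_isomorphic l1 \<alpha>1 h1 l2 \<alpha>2 h2"
      unfolding omega_isomorphic_def using phi0_iso[of 1] by auto
  qed
  have part2: "(\<exists>\<phi>. clinear \<phi> \<and>
           (\<forall>n i. \<phi> (monom (h1 ^ n) i) = monom (gpoly (\<eta>2 - \<eta>1) n h2) i))
      \<and> (\<forall>\<phi>. clinear \<phi> \<and>
           (\<forall>n i. \<phi> (monom (h1 ^ n) i) = monom (gpoly (\<eta>2 - \<eta>1) n h2) i) \<longrightarrow>
           (\<forall>\<psi>. omega_iso l1 \<alpha>1 h1 l2 \<alpha>2 h2 \<psi> \<longleftrightarrow>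
                 (\<exists>c. c \<noteq> 0 \<and> (\<forall>P. \<psi> P = cscale c (\<phi> P)))))"
    if L: "l1 = l2" and C: "\<alpha>1 * \<xi>1 = \<alpha>2 * \<xi>2"
  proof (intro conjI allI impI)
    show "\<exists>\<phi>. clinear \<phi> \<and> (\<forall>n i. \<phi> (monom (h1 ^ n) i) = monom (gpoly (\<eta>2 - \<eta>1) n h2) i)"
      using T.clinear_phi0 T.phi0_basis assms(7,8) by blast
  next
    fix \<phi> \<psi>
    assume "clinear \<phi> \<and> (\<forall>n i. \<phi> (monom (h1 ^ n) i) = monom (gpoly (\<eta>2 - \<eta>1) n h2) i)"
    then have lin: "clinear \<phi>" and bas: "\<And>n i. \<phi> (monom (h1 ^ n) i) = monom (gpoly (\<eta>2 - \<eta>1) n h2) i"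
      by auto
    have eqphi: "\<phi> P = T.phi0 P" for P
      by (rule T.agree[OF lin T.clinear_phi0]) (use bas assms(7,8) in \<open>simp add: T.phi0_basis\<close>)
    show "omega_iso l1 \<alpha>1 h1 l2 \<alpha>2 h2 \<psi> \<longleftrightarrow> (\<exists>c. c \<noteq> 0 \<and> (\<forall>P. \<psi> P = cscale c (\<phi> P)))"
    proof
      assume iso: "omega_iso l1 \<alpha>1 h1 l2 \<alpha>2 h2 \<psi>"
      interpret H: homsetup \<eta>1 \<xi>1 \<eta>2 \<xi>2 l1 l2 \<alpha>1 \<alpha>2 \<psi> by (rule hs(1)[OF iso])
      obtain a where a: "a \<noteq> 0" "\<psi> 1 = [:[:a:]:]" using H.w_struct(3)[OF hs(2)[OF iso]] by blast
      define \<chi> where "\<chi> = (\<lambda>P. \<psi> P - cscale a (T.phi0 P))"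
      interpret X: homsetup \<eta>1 \<xi>1 \<eta>2 \<xi>2 l1 l2 \<alpha>1 \<alpha>2 \<chi>
      proof unfold_locales
        show "l1 \<noteq> 0" "l2 \<noteq> 0" "\<alpha>1 \<noteq> 0" "\<alpha>2 \<noteq> 0" using assms by auto
        show "clinear \<chi>" unfolding \<chi>_def by (rule clinear_comb[OF H.lin T.clinear_phi0])
        fix v P
        show "\<chi> (omega_act l1 \<alpha>1 [:\<eta>1, \<xi>1:] v P) = omega_act l2 \<alpha>2 [:\<eta>2, \<xi>2:] v (\<chi> P)"
          unfolding \<chi>_def using H.hom[of v P] T.phi0_omega[OF C, of l1 v P] L
          by (simp add: omega_act_diff omega_act_cscale)
      qed
      have "\<chi> 1 = 0" unfolding \<chi>_def by (simp add: a(2) T.phi0_one cscale_def)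
      then have "\<chi> P = 0" for P by (rule X.det)
      then have "\<psi> P = cscale a (\<phi> P)" for P unfolding \<chi>_def eqphi by simp
      then show "\<exists>c. c \<noteq> 0 \<and> (\<forall>P. \<psi> P = cscale c (\<phi> P))" using a(1) by blast
    next
      assume "\<exists>c. c \<noteq> 0 \<and> (\<forall>P. \<psi> P = cscale c (\<phi> P))"
      then obtain c where c: "c \<noteq> 0" "\<And>P. \<psi> P = cscale c (\<phi> P)" by blast
      have "\<psi> = (\<lambda>P. cscale c (T.phi0 P))" using c(2) eqphi by auto
      then show "omega_iso l1 \<alpha>1 h1 l2 \<alpha>2 h2 \<psi>" using phi0_iso[OF L C c(1)] by simp
    qed
  qed
  show ?thesis using part1 part2 by blast
qed

end
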